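(* In every interval liminf game, positional strategies suffice: if a player (Eve or Adam) wins the game, then that player has a positional winning strategy.
   Context: A game graph is a tuple $G=(V,V_\exists,E,w,q_0)$ where $(V,E)$ is a finite directed graph in which every vertex has an outgoing edge, $w:E\to\mathbb{Z}$ is an integer edge-weight function, $V_\exists\subseteq V$ are Eve's vertices (the rest are Adam's), and $q_0\in V$ is the initial vertex. A play is an infinite path $v_0v_1\cdots$ with $v_0=q_0$. A strategy for a player maps finite play prefixes ending in one of that player's vertices to a successor vertex; it is positional (memoryless) if it depends only on the last vertex of the prefix. The liminf payoff of a play is $\liminf_{i\to\infty} w(v_i,v_{i+1})$. An interval liminf game is a pair $(G,I)$ with $I$ a finite union of real intervals; a play is winning for Eve iff its liminf payoff lies in $I$, and winning for Adam otherwise. A player wins the game if they have a strategy such that all plays consistent with it are winning for them. *)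

theory Defs
  imports "HOL-Analysis.Analysis" "HOL-Library.Extended_Real"
begin

definition game_graph :: "'v set \<Rightarrow> 'v set \<Rightarrow> ('v \<times> 'v) set \<Rightarrow> ('v \<times> 'v \<Rightarrow> int) \<Rightarrow> 'v \<Rightarrow> bool" where
  "game_graph V VE E w q0 \<longleftrightarrow> finite V \<and> VE \<subseteq> V \<and> E \<subseteq> V \<times> V
     \<and> (\<forall>v\<in>V. \<exists>u. (v, u) \<in> E) \<and> q0 \<in> V"

definition is_play :: "('v \<times> 'v) set \<Rightarrow> 'v \<Rightarrow> (nat \<Rightarrow> 'v) \<Rightarrow> bool" where
  "is_play E q0 p \<longleftrightarrow> p 0 = q0 \<and> (\<forall>i. (p i, p (Suc i)) \<in> E)"

definition is_prefix :: "('v \<times> 'v) set \<Rightarrow> 'v \<Rightarrow> 'v list \<Rightarrow> bool" where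
  "is_prefix E q0 h \<longleftrightarrow> h \<noteq> [] \<and> hd h = q0 \<and> (\<forall>i. Suc i < length h \<longrightarrow> (h ! i, h ! Suc i) \<in> E)"

definition is_strategy :: "('v \<times> 'v) set \<Rightarrow> 'v \<Rightarrow> 'v set \<Rightarrow> ('v list \<Rightarrow> 'v) \<Rightarrow> bool" where
  "is_strategy E q0 P \<sigma> \<longleftrightarrow> (\<forall>h. is_prefix E q0 h \<and> last h \<in> P \<longrightarrow> (last h, \<sigma> h) \<in> E)"

definition positional :: "('v list \<Rightarrow> 'v) \<Rightarrow> bool" where
  "positional \<sigma> \<longleftrightarrow> (\<exists>f. \<forall>h. h \<noteq> [] \<longrightarrow> \<sigma> h = f (last h))"

definition consistent :: "'v set \<Rightarrow> ('v list \<Rightarrow> 'v) \<Rightarrow> (nat \<Rightarrow> 'v) \<Rightarrow> bool" where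
  "consistent P \<sigma> p \<longleftrightarrow> (\<forall>i. p i \<in> P \<longrightarrow> p (Suc i) = \<sigma> (map p [0..<Suc i]))"

text \<open>Liminf payoff of a play (weights are bounded, so the liminf is finite).\<close>
definition liminf_payoff :: "('v \<times> 'v \<Rightarrow> int) \<Rightarrow> (nat \<Rightarrow> 'v) \<Rightarrow> ereal" where
  "liminf_payoff w p = Liminf sequentially (\<lambda>i. ereal (real_of_int (w (p i, p (Suc i)))))"

definition finite_union_of_intervals :: "real set \<Rightarrow> bool" where
  "finite_union_of_intervals I \<longleftrightarrow> (\<exists>F. finite F \<and> (\<forall>S\<in>F. is_interval S) \<and> I = \<Union>F)"

definition eve_winning_strategy where
  "eve_winning_strategy V VE E w q0 I \<sigma> \<longleftrightarrow> is_strategy E q0 VE \<sigma> \<and>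
     (\<forall>p. is_play E q0 p \<and> consistent VE \<sigma> p \<longrightarrow> liminf_payoff w p \<in> ereal ` I)"

definition adam_winning_strategy where
  "adam_winning_strategy V VE E w q0 I \<tau> \<longleftrightarrow> is_strategy E q0 (V - VE) \<tau> \<and>
     (\<forall>p. is_play E q0 p \<and> consistent (V - VE) \<tau> p \<longrightarrow> liminf_payoff w p \<notin> ereal ` I)"

end

theory Submission
  imports Defs
begin



locale G = fixes VE :: "'v set" and w :: "'v \<times> 'v \<Rightarrow> int" and S :: "int set"
begin

definition own :: "bool \<Rightarrow> 'v \<Rightarrow> bool" where "own b u \<longleftrightarrow> ((u \<in> VE) = b)"

definition LI :: "(nat \<Rightarrow> 'v) \<Rightarrow> int \<Rightarrow> bool" where
  "LI p k \<longleftrightarrow> (\<exists>\<^sub>F i in sequentially. w (p i, p (Suc i)) = k) \<and> (\<forall>\<^sub>F i in sequentially. k \<le> w (p i, p (Suc i)))"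

definition win :: "bool \<Rightarrow> (nat \<Rightarrow> 'v) \<Rightarrow> bool" where
  "win b p \<longleftrightarrow> (\<exists>k. LI p k \<and> (k \<in> S) = b)"

definition pl :: "('v \<times> 'v) set \<Rightarrow> (nat \<Rightarrow> 'v) \<Rightarrow> bool" where
  "pl F p \<longleftrightarrow> (\<forall>i. (p i, p (Suc i)) \<in> F)"

definition clos :: "bool \<Rightarrow> ('v \<times> 'v) set \<Rightarrow> 'v set \<Rightarrow> ('v \<Rightarrow> 'v) \<Rightarrow> bool" where
  "clos b F W s \<longleftrightarrow> (\<forall>u\<in>W. own b u \<longrightarrow> (u, s u) \<in> F \<and> s u \<in> W) \<and> (\<forall>u\<in>W. \<not> own b u \<longrightarrow> (\<forall>x. (u, x) \<in> F \<longrightarrow> x \<in> W))"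

definition consW :: "bool \<Rightarrow> ('v \<Rightarrow> 'v) \<Rightarrow> 'v set \<Rightarrow> (nat \<Rightarrow> 'v) \<Rightarrow> bool" where
  "consW b s W p \<longleftrightarrow> (\<forall>i. p i \<in> W \<longrightarrow> own b (p i) \<longrightarrow> p (Suc i) = s (p i))"

definition wins :: "bool \<Rightarrow> ('v \<times> 'v) set \<Rightarrow> 'v set \<Rightarrow> ('v \<Rightarrow> 'v) \<Rightarrow> bool" where
  "wins b F W s \<longleftrightarrow> clos b F W s \<and> (\<forall>p. pl F p \<longrightarrow> p 0 \<in> W \<longrightarrow> consW b s W p \<longrightarrow> win b p)"

lemma LI_shift: "LI (\<lambda>i. p (i + j)) k \<longleftrightarrow> LI p k"
proof -
  have a: "(\<forall>\<^sub>F i in sequentially. w (p (i + j), p (Suc (i + j))) \<noteq> k) \<longleftrightarrow> (\<forall>\<^sub>F i in sequentially. w (p i, p (Suc i)) \<noteq> k)"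
    using eventually_sequentially_seg[of "\<lambda>i. w (p i, p (Suc i)) \<noteq> k" j] by simp
  have b: "(\<forall>\<^sub>F i in sequentially. k \<le> w (p (i + j), p (Suc (i + j)))) \<longleftrightarrow> (\<forall>\<^sub>F i in sequentially. k \<le> w (p i, p (Suc i)))"
    using eventually_sequentially_seg[of "\<lambda>i. k \<le> w (p i, p (Suc i))" j] by simp
  show ?thesis unfolding LI_def frequently_def using a b by simp
qed

lemma win_shift: "win b (\<lambda>i. p (i + j)) \<Longrightarrow> win b p"
  unfolding win_def LI_shift by simp

lemma pl_shift: "pl F p \<Longrightarrow> pl F (\<lambda>i. p (i + j))"
  unfolding pl_def by (metis add_Suc)

lemma consW_shift: "consW b s W p \<Longrightarrow> consW b s W (\<lambda>i. p (i + j))"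
  unfolding consW_def by (metis add_Suc)

lemma win_min:
  assumes "\<forall>i. m \<le> w (p i, p (Suc i))" "\<exists>\<^sub>F i in sequentially. w (p i, p (Suc i)) = m" "(m \<in> S) = b"
  shows "win b p"
  unfolding win_def LI_def using assms by (auto intro!: exI[of _ m])

lemma stay:
  assumes "clos b F W s" "pl F p" "p 0 \<in> W" "consW b s W p"
  shows "p i \<in> W"
proof (induction i)
  case 0 then show ?case using assms by simp
next
  case (Suc i)
  then show ?case using assms unfolding clos_def consW_def pl_def by metis
qed

lemma transfer:
  assumes "wins b F' W s" "F' \<subseteq> F" "\<forall>u\<in>W. \<not> own b u \<longrightarrow> (\<forall>x. (u, x) \<in> F \<longrightarrow> (u, x) \<in> F')"
  shows "wins b F W s"
proof -
  have c': "clos b F' W s" using assms(1) wins_def by blast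
  have c: "clos b F W s" using c' assms(2,3) unfolding clos_def by blast
  show ?thesis unfolding wins_def
  proof (intro conjI c allI impI)
    fix p assume p: "pl F p" "p 0 \<in> W" "consW b s W p"
    have inW: "\<And>i. p i \<in> W" using stay[OF c p] .
    have "pl F' p" unfolding pl_def
    proof
      fix i show "(p i, p (Suc i)) \<in> F'"
      proof (cases "own b (p i)")
        case True then show ?thesis using p(3) inW[of i] c' unfolding consW_def clos_def by metis
      next
        case False then show ?thesis using assms(3) inW[of i] p(1) unfolding pl_def by blast
      qed
    qed
    then show "win b p" using assms(1) p unfolding wins_def by blast
  qed
qed

end



lemma finite_bound:
  assumes "finite A" "\<forall>x\<in>A. \<exists>k::nat. P x k" "\<And>x k k'. P x k \<Longrightarrow> k \<le> k' \<Longrightarrow> P x k'"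
  shows "\<exists>N. \<forall>x\<in>A. P x N"
  using assms(1,2)
proof (induction A rule: finite_induct)
  case empty then show ?case by simp
next
  case (insert x A)
  then obtain N where N: "\<forall>y\<in>A. P y N" by auto
  obtain k where k: "P x k" using insert by auto
  show ?case using N k assms(3) by (intro exI[of _ "max N k"]) (auto intro: max.cobounded1 max.cobounded2)
qed

context G begin

definition cpre :: "bool \<Rightarrow> ('v \<times> 'v) set \<Rightarrow> ('v \<times> 'v) set \<Rightarrow> 'v set \<Rightarrow> 'v set" where
  "cpre c F T X = {u. (own c u \<and> (\<exists>x. (u, x) \<in> F \<and> ((u, x) \<in> T \<or> x \<in> X)))
     \<or> (\<not> own c u \<and> (\<exists>x. (u, x) \<in> F) \<and> (\<forall>x. (u, x) \<in> F \<longrightarrow> (u, x) \<in> T \<or> x \<in> X))}"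

definition attrn :: "bool \<Rightarrow> ('v \<times> 'v) set \<Rightarrow> ('v \<times> 'v) set \<Rightarrow> nat \<Rightarrow> 'v set" where
  "attrn c F T n = (cpre c F T ^^ n) {}"

definition attr :: "bool \<Rightarrow> ('v \<times> 'v) set \<Rightarrow> ('v \<times> 'v) set \<Rightarrow> 'v set" where
  "attr c F T = (\<Union>n. attrn c F T n)"

definition astr :: "bool \<Rightarrow> ('v \<times> 'v) set \<Rightarrow> ('v \<times> 'v) set \<Rightarrow> 'v \<Rightarrow> 'v" where
  "astr c F T u = (SOME x. (u, x) \<in> F \<and> ((u, x) \<in> T \<or> x \<in> attrn c F T (LEAST n. u \<in> attrn c F T (Suc n))))"

lemma cpre_mono: "X \<subseteq> Y \<Longrightarrow> cpre c F T X \<subseteq> cpre c F T Y"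
  unfolding cpre_def by blast

lemma attrn_0[simp]: "attrn c F T 0 = {}" unfolding attrn_def by simp

lemma attrn_Suc: "attrn c F T (Suc n) = cpre c F T (attrn c F T n)"
  unfolding attrn_def by simp

lemma attrn_Suc_mono: "attrn c F T n \<subseteq> attrn c F T (Suc n)"
proof (induction n)
  case 0 then show ?case by simp
next
  case (Suc n) then show ?case unfolding attrn_Suc[of _ _ _ "Suc n"] attrn_Suc[of _ _ _ n] by (rule cpre_mono)
qed

lemma attrn_mono: "n \<le> k \<Longrightarrow> attrn c F T n \<subseteq> attrn c F T k"
  using lift_Suc_mono_le[of "attrn c F T", OF attrn_Suc_mono] by blast

lemma cpre_dom: "cpre c F T X \<subseteq> Domain F" unfolding cpre_def by blast

lemma attr_dom: "attr c F T \<subseteq> Domain F"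
proof -
  have "attrn c F T n \<subseteq> Domain F" for n by (cases n) (auto simp: attrn_Suc cpre_dom[THEN subsetD])
  then show ?thesis unfolding attr_def by blast
qed

lemma attr_fix:
  assumes "finite F" "u \<in> cpre c F T (attr c F T)"
  shows "u \<in> attr c F T"
proof (cases "own c u")
  case True
  then obtain x where x: "(u, x) \<in> F" "(u, x) \<in> T \<or> x \<in> attr c F T" using assms(2) unfolding cpre_def by auto
  show ?thesis
  proof (cases "(u, x) \<in> T")
    case True
    then have "u \<in> attrn c F T (Suc 0)" using x \<open>own c u\<close> by (auto simp: attrn_Suc cpre_def)
    then show ?thesis unfolding attr_def by blast
  next
    case False
    then obtain k where "x \<in> attrn c F T k" using x unfolding attr_def by auto
    then have "u \<in> attrn c F T (Suc k)" using x \<open>own c u\<close> by (auto simp: attrn_Suc cpre_def)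
    then show ?thesis unfolding attr_def by blast
  qed
next
  case False
  have fin: "finite {x. (u, x) \<in> F}"
  proof -
    have "{x. (u, x) \<in> F} \<subseteq> snd ` F" by force
    then show ?thesis using assms(1) finite_subset by blast
  qed
  have "\<forall>x\<in>{x. (u, x) \<in> F}. \<exists>k. (u, x) \<in> T \<or> x \<in> attrn c F T k"
    using assms(2) False unfolding cpre_def attr_def by auto
  then obtain N where N: "\<forall>x\<in>{x. (u, x) \<in> F}. (u, x) \<in> T \<or> x \<in> attrn c F T N"
    using finite_bound[OF fin, of "\<lambda>x k. (u, x) \<in> T \<or> x \<in> attrn c F T k"] attrn_mono by blast
  have "u \<in> attrn c F T (Suc N)" using N False assms(2) by (auto simp: attrn_Suc cpre_def)
  then show ?thesis unfolding attr_def by blast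
qed

lemma attr_out:
  assumes "finite F" "u \<notin> attr c F T"
  shows "own c u \<Longrightarrow> (u, x) \<in> F \<Longrightarrow> (u, x) \<notin> T \<and> x \<notin> attr c F T"
    and "\<not> own c u \<Longrightarrow> (u, y) \<in> F \<Longrightarrow> \<exists>x. (u, x) \<in> F \<and> (u, x) \<notin> T \<and> x \<notin> attr c F T"
  using attr_fix[OF assms(1), of u c T] assms(2) unfolding cpre_def by blast+

lemma attrn_ex: "u \<in> attr c F T \<Longrightarrow> \<exists>n. u \<in> attrn c F T (Suc n)"
  unfolding attr_def by (metis UN_E attrn_0 empty_iff not0_implies_Suc)

lemma astr_prop:
  assumes "u \<in> attrn c F T (Suc n)" "own c u"
  shows "(u, astr c F T u) \<in> F \<and> ((u, astr c F T u) \<in> T \<or> astr c F T u \<in> attrn c F T n)"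
proof -
  define r where "r = (LEAST n. u \<in> attrn c F T (Suc n))"
  have r1: "u \<in> attrn c F T (Suc r)" unfolding r_def by (rule LeastI[of _ n]) (rule assms(1))
  have r2: "r \<le> n" unfolding r_def by (rule Least_le) (rule assms(1))
  have "\<exists>x. (u, x) \<in> F \<and> ((u, x) \<in> T \<or> x \<in> attrn c F T r)"
    using r1 assms(2) by (auto simp: attrn_Suc cpre_def)
  then have "(u, astr c F T u) \<in> F \<and> ((u, astr c F T u) \<in> T \<or> astr c F T u \<in> attrn c F T r)"
    unfolding astr_def r_def[symmetric] by (rule someI_ex)
  then show ?thesis using attrn_mono[OF r2] by blast
qed

lemma astr_prop':
  assumes "u \<in> attr c F T" "own c u"
  shows "(u, astr c F T u) \<in> F \<and> ((u, astr c F T u) \<in> T \<or> astr c F T u \<in> attr c F T)"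
  using attrn_ex[OF assms(1)] astr_prop[OF _ assms(2)] unfolding attr_def by blast

lemma attrn_opp:
  assumes "u \<in> attrn c F T (Suc n)" "\<not> own c u" "(u, x) \<in> F"
  shows "(u, x) \<in> T \<or> x \<in> attrn c F T n"
  using assms by (auto simp: attrn_Suc cpre_def)

lemma attr_opp:
  assumes "u \<in> attr c F T" "\<not> own c u" "(u, x) \<in> F"
  shows "(u, x) \<in> T \<or> x \<in> attr c F T"
  using attrn_ex[OF assms(1)] attrn_opp[OF _ assms(2,3)] unfolding attr_def by blast

lemma attr_reach_n:
  assumes "pl F p" "p 0 \<in> attrn c F T n"
    "\<forall>i. p i \<in> attr c F T \<and> p i \<notin> X \<and> own c (p i) \<longrightarrow> p (Suc i) = astr c F T (p i)"
  shows "\<exists>i. p i \<in> X \<or> (p i, p (Suc i)) \<in> T"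
  using assms
proof (induction n arbitrary: p)
  case 0 then show ?case by simp
next
  case (Suc n)
  show ?case
  proof (cases "p 0 \<in> X")
    case True then show ?thesis by blast
  next
    case nX: False
    have inA: "p 0 \<in> attr c F T" using Suc.prems(2) unfolding attr_def by blast
    have step: "(p 0, p 1) \<in> T \<or> p 1 \<in> attrn c F T n"
    proof (cases "own c (p 0)")
      case True
      then have "p 1 = astr c F T (p 0)" using Suc.prems(3) inA nX by auto
      then show ?thesis using astr_prop[OF Suc.prems(2) True] by simp
    next
      case False
      then show ?thesis using attrn_opp[OF Suc.prems(2) False] Suc.prems(1) unfolding pl_def by simp
    qed
    show ?thesis
    proof (cases "(p 0, p 1) \<in> T")
      case True then show ?thesis by (metis One_nat_def)
    next
      case False
      then have "p 1 \<in> attrn c F T n" using step by simp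
      then have "\<exists>i. p (i + 1) \<in> X \<or> (p (i + 1), p (Suc i + 1)) \<in> T"
        using Suc.IH[of "\<lambda>i. p (i + 1)"] pl_shift[OF Suc.prems(1), of 1] Suc.prems(3) by auto
      then show ?thesis by (metis add_Suc)
    qed
  qed
qed

lemma attr_reach:
  assumes "pl F p" "p 0 \<in> attr c F T"
    "\<forall>i. p i \<in> attr c F T \<and> p i \<notin> X \<and> own c (p i) \<longrightarrow> p (Suc i) = astr c F T (p i)"
  shows "\<exists>i. p i \<in> X \<or> (p i, p (Suc i)) \<in> T"
  using assms attr_reach_n unfolding attr_def by blast

end



context G begin

lemma own_neg[simp]: "own (\<not> b) u \<longleftrightarrow> \<not> own b u" unfolding own_def by auto

lemma caseI:
  assumes fin: "finite F" and FU: "F \<subseteq> U \<times> U" and mb: "\<forall>e\<in>F. m \<le> w e" and good: "(m \<in> S) = b"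
    and T: "T = {e\<in>F. w e = m}" and A: "A = attr b F T"
    and F': "F' = {e\<in>F. fst e \<notin> A \<and> snd e \<notin> A \<and> w e \<noteq> m}"
    and W': "wins b F' (U - A) s'"
  shows "wins b F U (\<lambda>u. if u \<in> A then astr b F T u else s' u)" (is "wins b F U ?\<sigma>")
proof -
  have c': "clos b F' (U - A) s'" using W' wins_def by blast
  have FF: "F' \<subseteq> F" using F' by blast
  have c: "clos b F U ?\<sigma>" unfolding clos_def
  proof (rule conjI; intro ballI impI allI)
    fix u assume u: "u \<in> U" "own b u"
    show "(u, ?\<sigma> u) \<in> F \<and> ?\<sigma> u \<in> U"
    proof (cases "u \<in> A")
      case True then show ?thesis using astr_prop'[of u b F T] u(2) A FU by auto
    next
      case False
      then have "u \<in> U - A" using u by blast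
      then have "(u, s' u) \<in> F' \<and> s' u \<in> U - A" using c' u(2) unfolding clos_def by blast
      then show ?thesis using False FF by auto
    qed
  next
    fix u x assume "u \<in> U" "\<not> own b u" "(u, x) \<in> F" then show "x \<in> U" using FU by blast
  qed
  show ?thesis unfolding wins_def
  proof (intro conjI c allI impI)
    fix p assume p: "pl F p" "p 0 \<in> U" "consW b ?\<sigma> U p"
    have inU: "p i \<in> U" for i using stay[OF c p] .
    have edge: "(p i, p (Suc i)) \<in> F" for i using p(1) pl_def by blast
    show "win b p"
    proof (cases "\<exists>\<^sub>F i in sequentially. w (p i, p (Suc i)) = m")
      case True
      then show ?thesis using win_min[of m p b] mb edge good by blast
    next
      case False
      then obtain N where N: "\<And>i. i \<ge> N \<Longrightarrow> w (p i, p (Suc i)) \<noteq> m"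
        unfolding not_frequently eventually_sequentially by blast
      have nA: "p i \<notin> A" if "i \<ge> N" for i
      proof
        assume pi: "p i \<in> A"
        have "\<exists>k. (\<lambda>k. p (k + i)) k \<in> {} \<or> ((\<lambda>k. p (k + i)) k, (\<lambda>k. p (k + i)) (Suc k)) \<in> T"
        proof (rule attr_reach[of F _ b T])
          show "pl F (\<lambda>k. p (k + i))" using pl_shift[OF p(1)] .
          show "p (0 + i) \<in> attr b F T" using pi A by simp
          show "\<forall>k. p (k + i) \<in> attr b F T \<and> p (k + i) \<notin> {} \<and> own b (p (k + i)) \<longrightarrow> p (Suc k + i) = astr b F T (p (k + i))"
            using p(3) inU A unfolding consW_def by auto
        qed
        then obtain k where "w (p (k + i), p (Suc (k + i))) = m" using T by auto
        then show False using N[of "k + i"] that by simp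
      qed
      define q where "q = (\<lambda>i. p (i + N))"
      have "pl F' q" unfolding pl_def q_def F'
        using edge nA N by auto
      moreover have "q 0 \<in> U - A" using inU nA q_def by auto
      moreover have "consW b s' (U - A) q"
        using p(3) nA unfolding consW_def q_def by auto
      ultimately have "win b q" using W' unfolding wins_def by blast
      then show ?thesis using win_shift q_def by blast
    qed
  qed
qed

lemma caseII:
  assumes fin: "finite F" and FU: "F \<subseteq> U \<times> U"
    and Wo: "wins c F Wo' so'"
    and T2: "T2 = {e\<in>F. snd e \<in> Wo'}" and A2: "A2 = attr c F T2" and B: "B = Wo' \<union> A2"
    and F'': "F'' = {e\<in>F. fst e \<notin> B \<and> snd e \<notin> B}"
    and W'': "wins c F'' Wo'' so''"
  shows "wins c F (Wo'' \<union> B) (\<lambda>u. if u \<in> Wo' then so' u else if u \<in> A2 then astr c F T2 u else so'' u)"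
    (is "wins c F ?R ?\<tau>")
proof -
  have co: "clos c F Wo' so'" using Wo wins_def by blast
  have c'': "clos c F'' Wo'' so''" using W'' wins_def by blast
  have c: "clos c F ?R ?\<tau>" unfolding clos_def
  proof (rule conjI; intro ballI impI allI)
    fix u assume u: "u \<in> ?R" "own c u"
    show "(u, ?\<tau> u) \<in> F \<and> ?\<tau> u \<in> ?R"
    proof (cases "u \<in> Wo'")
      case True
      have "(u, so' u) \<in> F \<and> so' u \<in> Wo'" using co True u(2) unfolding clos_def by blast
      then show ?thesis using True B by simp
    next
      case nW: False
      show ?thesis
      proof (cases "u \<in> A2")
        case True
        have "(u, astr c F T2 u) \<in> F \<and> ((u, astr c F T2 u) \<in> T2 \<or> astr c F T2 u \<in> attr c F T2)"
          using astr_prop'[of u c F T2] True u(2) A2 by blast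
        moreover have "\<And>a. (u, a) \<in> T2 \<Longrightarrow> a \<in> Wo'" using T2 by auto
        ultimately have "(u, astr c F T2 u) \<in> F \<and> astr c F T2 u \<in> ?R" using A2 B by blast
        then show ?thesis using nW True by simp
      next
        case False
        then have uW: "u \<in> Wo''" using u(1) nW B by blast
        have "(u, so'' u) \<in> F'' \<and> so'' u \<in> Wo''" using c'' u(2) uW unfolding clos_def by blast
        then have "(u, so'' u) \<in> F \<and> so'' u \<in> ?R" unfolding F'' by simp
        then show ?thesis using nW False by simp
      qed
    qed
  next
    fix u x assume u: "u \<in> ?R" "\<not> own c u" "(u, x) \<in> F"
    show "x \<in> ?R"
    proof (cases "u \<in> Wo'")
      case True
      have "x \<in> Wo'" using co True u(2,3) unfolding clos_def by blast
      then show ?thesis using B by blast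
    next
      case nW: False
      show ?thesis
      proof (cases "u \<in> A2")
        case True
        have "(u, x) \<in> T2 \<or> x \<in> attr c F T2" using attr_opp[of u c F T2 x] u(2,3) True A2 by blast
        moreover have "(u, x) \<in> T2 \<Longrightarrow> x \<in> Wo'" using T2 by auto
        ultimately show ?thesis using A2 B by blast
      next
        case False
        then have uW: "u \<in> Wo''" "u \<notin> B" using u(1) nW B by blast+
        show ?thesis
        proof (cases "x \<in> B")
          case True then show ?thesis by blast
        next
          case False
          then have "(u, x) \<in> F''" using u(3) uW(2) unfolding F'' by simp
          then have "x \<in> Wo''" using c'' u(2) uW(1) unfolding clos_def by blast
          then show ?thesis by blast
        qed
      qed
    qed
  qed
  show ?thesis unfolding wins_def
  proof (intro conjI c allI impI)
    fix p assume p: "pl F p" "p 0 \<in> ?R" "consW c ?\<tau> ?R p"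
    have inR: "p i \<in> ?R" for i using stay[OF c p] .
    have edge: "(p i, p (Suc i)) \<in> F" for i using p(1) pl_def by blast
    have tau: "p (Suc i) = ?\<tau> (p i)" if "own c (p i)" for i
      using p(3) inR[of i] that unfolding consW_def by blast
    have cl1: "win c p" if j: "p j \<in> Wo'" for j
    proof -
      have "consW c so' Wo' (\<lambda>i. p (i + j))" unfolding consW_def
      proof (intro allI impI)
        fix i assume "p (i + j) \<in> Wo'" "own c (p (i + j))"
        then show "p (Suc i + j) = so' (p (i + j))" using tau[of "i + j"] by simp
      qed
      then have "win c (\<lambda>i. p (i + j))"
        using Wo pl_shift[OF p(1), of j] j unfolding wins_def by simp
      then show ?thesis using win_shift by blast
    qed
    have cl2: "\<exists>k. p k \<in> Wo'" if j: "p j \<in> A2" for j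
    proof -
      have "\<exists>k. (\<lambda>k. p (k + j)) k \<in> Wo' \<or> ((\<lambda>k. p (k + j)) k, (\<lambda>k. p (k + j)) (Suc k)) \<in> T2"
      proof (rule attr_reach[of F _ c T2])
        show "pl F (\<lambda>k. p (k + j))" using pl_shift[OF p(1)] .
        show "p (0 + j) \<in> attr c F T2" using j A2 by simp
        show "\<forall>k. p (k + j) \<in> attr c F T2 \<and> p (k + j) \<notin> Wo' \<and> own c (p (k + j)) \<longrightarrow> p (Suc k + j) = astr c F T2 (p (k + j))"
        proof (intro allI impI)
          fix k assume k: "p (k + j) \<in> attr c F T2 \<and> p (k + j) \<notin> Wo' \<and> own c (p (k + j))"
          then have "p (Suc (k + j)) = ?\<tau> (p (k + j))" using tau by blast
          then show "p (Suc k + j) = astr c F T2 (p (k + j))" using k A2 by simp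
        qed
      qed
      then obtain k where "p (k + j) \<in> Wo' \<or> (p (k + j), p (Suc (k + j))) \<in> T2" by auto
      then show ?thesis unfolding T2 by auto
    qed
    show "win c p"
    proof (cases "\<exists>j. p j \<in> B")
      case True
      then obtain j where "p j \<in> B" by blast
      then show ?thesis using cl1 cl2 B by blast
    next
      case False
      have "pl F'' p" unfolding pl_def F'' using edge False by simp
      moreover have "p 0 \<in> Wo''" using p(2) False by blast
      moreover have "consW c so'' Wo'' p" unfolding consW_def
      proof (intro allI impI)
        fix i assume "p i \<in> Wo''" "own c (p i)"
        then show "p (Suc i) = so'' (p i)" using tau[of i] False B by simp
      qed
      ultimately show ?thesis using W'' unfolding wins_def by blast
    qed
  qed
qed

end



context G begin

definition det :: "'v set \<Rightarrow> ('v \<times> 'v) set \<Rightarrow> bool" where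
  "det U F \<longleftrightarrow> (\<exists>W0 W1 s0 s1. W0 \<union> W1 = U \<and> wins True F W0 s0 \<and> wins False F W1 s1)"

lemma det_b:
  assumes "det U F" shows "\<exists>W W' s s'. W \<union> W' = U \<and> wins b F W s \<and> wins (\<not> b) F W' s'"
proof -
  obtain W0 W1 s0 s1 where h: "W0 \<union> W1 = U" "wins True F W0 s0" "wins False F W1 s1"
    using assms unfolding det_def by blast
  show ?thesis
  proof (cases b)
    case True then show ?thesis using h by auto
  next
    case False
    have "W1 \<union> W0 = U" using h(1) by blast
    then show ?thesis using h False by auto
  qed
qed

lemma det_I:
  assumes "W \<union> W' = U" "wins b F W s" "wins (\<not> b) F W' s'" shows "det U F"
proof (cases b)
  case True then show ?thesis using assms unfolding det_def by auto
next
  case False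
  have "W' \<union> W = U" using assms(1) by blast
  then show ?thesis using assms False unfolding det_def by auto
qed

lemma wins_empty: "wins b F {} s"
  unfolding wins_def clos_def by simp

lemma zielonka:
  assumes "finite F" "F \<subseteq> U \<times> U" "\<forall>u\<in>U. \<exists>x. (u, x) \<in> F"
  shows "det U F"
  using assms
proof (induction "card F" arbitrary: U F rule: less_induct)
  case less
  note fin = less.prems(1) and FU = less.prems(2) and ar = less.prems(3)
  show ?case
  proof (cases "F = {}")
    case True
    then have "U = {}" using ar by auto
    then show ?thesis using det_I[of "{}" "{}" U True F] wins_empty by auto
  next
    case Fne: False
    define m where "m = Min (w ` F)"
    have mb: "\<forall>e\<in>F. m \<le> w e" unfolding m_def using fin by auto
    have "m \<in> w ` F" unfolding m_def using fin Fne by (intro Min_in) auto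
    then obtain e0 where e0: "e0 \<in> F" "w e0 = m" by blast
    define b where "b = (m \<in> S)"
    define T where "T = {e\<in>F. w e = m}"
    define A where "A = attr b F T"
    define F' where "F' = {e\<in>F. fst e \<notin> A \<and> snd e \<notin> A \<and> w e \<noteq> m}"
    have sub': "F' \<subseteq> (U - A) \<times> (U - A)" using FU unfolding F'_def by auto
    have ar': "\<forall>u\<in>U - A. \<exists>x. (u, x) \<in> F'"
    proof
      fix u assume u: "u \<in> U - A"
      obtain y where y: "(u, y) \<in> F" using ar u by blast
      show "\<exists>x. (u, x) \<in> F'"
      proof (cases "own b u")
        case True
        have "(u, y) \<notin> T \<and> y \<notin> A" using attr_out(1)[OF fin _ True y, of T] u A_def by blast
        then show ?thesis using y u unfolding F'_def T_def by auto
      next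
        case False
        obtain x where "(u, x) \<in> F \<and> (u, x) \<notin> T \<and> x \<notin> attr b F T"
          using attr_out(2)[OF fin _ False y, of T] u A_def by blast
        then show ?thesis using u unfolding F'_def T_def A_def by auto
      qed
    qed
    have card': "card F' < card F"
    proof (rule psubset_card_mono[OF fin])
      show "F' \<subset> F" using e0 unfolding F'_def by auto
    qed
    have fin': "finite F'" using fin unfolding F'_def by simp
    obtain Wp' Wo' sp' so' where W': "Wp' \<union> Wo' = U - A" "wins b F' Wp' sp'" "wins (\<not> b) F' Wo' so'"
      using det_b[OF less.hyps[OF card' fin' sub' ar'], of b] by blast
    have Wo_F: "wins (\<not> b) F Wo' so'"
    proof (rule transfer[OF W'(3)])
      show "F' \<subseteq> F" unfolding F'_def by auto
      show "\<forall>u\<in>Wo'. \<not> own (\<not> b) u \<longrightarrow> (\<forall>x. (u, x) \<in> F \<longrightarrow> (u, x) \<in> F')"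
      proof (intro ballI impI allI)
        fix u x assume u: "u \<in> Wo'" "\<not> own (\<not> b) u" "(u, x) \<in> F"
        have ob: "own b u" using u(2) by simp
        have uA: "u \<notin> A" using u(1) W'(1) by blast
        have "(u, x) \<notin> T \<and> x \<notin> A" using attr_out(1)[OF fin _ ob u(3), of T] uA A_def by blast
        then show "(u, x) \<in> F'" using u(3) uA unfolding F'_def T_def by auto
      qed
    qed
    show ?thesis
    proof (cases "Wo' = {}")
      case True
      then have "Wp' = U - A" using W'(1) by simp
      then have "wins b F' (U - A) sp'" using W'(2) by simp
      then have "wins b F U (\<lambda>u. if u \<in> A then astr b F T u else sp' u)"
        using caseI[OF fin FU mb _ T_def A_def F'_def] b_def by blast
      then show ?thesis using det_I[of U "{}" U b F] wins_empty by blast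
    next
      case Wne: False
      define T2 where "T2 = {e\<in>F. snd e \<in> Wo'}"
      define A2 where "A2 = attr (\<not> b) F T2"
      define B where "B = Wo' \<union> A2"
      define F'' where "F'' = {e\<in>F. fst e \<notin> B \<and> snd e \<notin> B}"
      have sub'': "F'' \<subseteq> (U - B) \<times> (U - B)" using FU unfolding F''_def by auto
      have ar'': "\<forall>u\<in>U - B. \<exists>x. (u, x) \<in> F''"
      proof
        fix u assume u: "u \<in> U - B"
        then have uA2: "u \<notin> attr (\<not> b) F T2" "u \<notin> B" unfolding B_def A2_def by auto
        obtain y where y: "(u, y) \<in> F" using ar u by blast
        show "\<exists>x. (u, x) \<in> F''"
        proof (cases "own (\<not> b) u")
          case True
          have "(u, y) \<notin> T2 \<and> y \<notin> attr (\<not> b) F T2" using attr_out(1)[OF fin uA2(1) True y] .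
          then show ?thesis using y uA2 unfolding F''_def T2_def B_def A2_def by auto
        next
          case False
          obtain x where "(u, x) \<in> F \<and> (u, x) \<notin> T2 \<and> x \<notin> attr (\<not> b) F T2"
            using attr_out(2)[OF fin uA2(1) False y] by blast
          then show ?thesis using uA2 unfolding F''_def T2_def B_def A2_def by auto
        qed
      qed
      obtain u0 where u0: "u0 \<in> Wo'" using Wne by blast
      then have "u0 \<in> U" using W'(1) by blast
      then obtain x0 where x0: "(u0, x0) \<in> F" using ar by blast
      have card'': "card F'' < card F"
      proof (rule psubset_card_mono[OF fin])
        have "(u0, x0) \<notin> F''" using u0 unfolding F''_def B_def by auto
        then show "F'' \<subset> F" using x0 unfolding F''_def by blast
      qed
      have fin'': "finite F''" using fin unfolding F''_def by simp
      obtain Wp'' Wo'' sp'' so'' where W'': "Wp'' \<union> Wo'' = U - B" "wins b F'' Wp'' sp''" "wins (\<not> b) F'' Wo'' so''"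
        using det_b[OF less.hyps[OF card'' fin'' sub'' ar''], of b] by blast
      have P: "wins b F Wp'' sp''"
      proof (rule transfer[OF W''(2)])
        show "F'' \<subseteq> F" unfolding F''_def by auto
        show "\<forall>u\<in>Wp''. \<not> own b u \<longrightarrow> (\<forall>x. (u, x) \<in> F \<longrightarrow> (u, x) \<in> F'')"
        proof (intro ballI impI allI)
          fix u x assume u: "u \<in> Wp''" "\<not> own b u" "(u, x) \<in> F"
          have ob: "own (\<not> b) u" using u(2) by simp
          have uB: "u \<notin> B" "u \<notin> attr (\<not> b) F T2" using u(1) W''(1) unfolding B_def A2_def by blast+
          have "(u, x) \<notin> T2 \<and> x \<notin> attr (\<not> b) F T2" using attr_out(1)[OF fin uB(2) ob u(3)] .
          then show "(u, x) \<in> F''" using u(3) uB(1) unfolding F''_def T2_def B_def A2_def by auto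
        qed
      qed
      have O: "wins (\<not> b) F (Wo'' \<union> B) (\<lambda>u. if u \<in> Wo' then so' u else if u \<in> A2 then astr (\<not> b) F T2 u else so'' u)"
        by (rule caseII[OF fin FU Wo_F T2_def A2_def B_def F''_def W''(3)])
      have "B \<subseteq> U"
      proof -
        have "Wo' \<subseteq> U" using W'(1) by blast
        moreover have "A2 \<subseteq> U" using attr_dom[of "\<not> b" F T2] FU unfolding A2_def by blast
        ultimately show ?thesis unfolding B_def by blast
      qed
      then have "Wp'' \<union> (Wo'' \<union> B) = U" using W''(1) by blast
      then show ?thesis using det_I P O by blast
    qed
  qed
qed

end



context G begin

lemma LI_liminf:
  assumes "LI p k"
  shows "liminf_payoff w p = ereal (real_of_int k)"
proof -
  define f where "f = (\<lambda>i. ereal (real_of_int (w (p i, p (Suc i)))))"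
  have fr: "\<exists>\<^sub>F i in sequentially. w (p i, p (Suc i)) = k" and ev: "\<forall>\<^sub>F i in sequentially. k \<le> w (p i, p (Suc i))"
    using assms unfolding LI_def by auto
  have "Liminf sequentially (\<lambda>i. ereal (real_of_int k)) \<le> Liminf sequentially f"
    by (rule Liminf_mono) (use ev in \<open>auto simp: f_def elim!: eventually_mono\<close>)
  then have ge: "ereal (real_of_int k) \<le> Liminf sequentially f"
    by (simp add: Liminf_const)
  have le: "\<not> ereal (real_of_int k) < Liminf sequentially f"
  proof
    assume "ereal (real_of_int k) < Liminf sequentially f"
    then have "\<forall>\<^sub>F i in sequentially. ereal (real_of_int k) < f i"
      using le_Liminf_iff[of "Liminf sequentially f" sequentially f] by blast
    then have "\<forall>\<^sub>F i in sequentially. w (p i, p (Suc i)) \<noteq> k"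
      by (rule eventually_mono) (auto simp: f_def)
    then show False using fr unfolding frequently_def by blast
  qed
  show ?thesis unfolding liminf_payoff_def f_def[symmetric] using ge le by (simp add: not_less)
qed

lemma prefix_last:
  assumes gg: "game_graph V VE E w q0" and h: "is_prefix E q0 h"
  shows "last h \<in> V"
proof (cases "length h = 1")
  case True
  then have "last h = hd h" by (cases h) auto
  then show ?thesis using h gg unfolding is_prefix_def game_graph_def by simp
next
  case False
  have "length h \<noteq> 0" using h unfolding is_prefix_def by simp
  then have l: "length h \<ge> 2" using False by linarith
  then have "(h ! (length h - 2), h ! Suc (length h - 2)) \<in> E" using h unfolding is_prefix_def by auto
  moreover have "Suc (length h - 2) = length h - 1" using l by simp
  moreover have "last h = h ! (length h - 1)" using h unfolding is_prefix_def by (simp add: last_conv_nth)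
  ultimately show ?thesis using gg unfolding game_graph_def by auto
qed

lemma mkplay:
  assumes gg: "game_graph V VE E w q0" and str: "is_strategy E q0 P g" and cl: "clos b E W s"
    and q0W: "q0 \<in> W" and WV: "W \<subseteq> V" and Pown: "\<forall>u\<in>V. (u \<in> P \<longleftrightarrow> \<not> own b u)"
  shows "\<exists>p. is_play E q0 p \<and> consistent P g p \<and> consW b s W p"
proof -
  define nxt where "nxt = (\<lambda>hh. if last hh \<in> P then g hh else s (last hh))"
  define h where "h = rec_nat [q0] (\<lambda>_ hh. hh @ [nxt hh])"
  have h0: "h 0 = [q0]" and hS: "h (Suc n) = h n @ [nxt (h n)]" for n unfolding h_def by simp_all
  have stepE: "(last hh, nxt hh) \<in> E \<and> nxt hh \<in> W" if "is_prefix E q0 hh" "last hh \<in> W" for hh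
  proof (cases "last hh \<in> P")
    case True
    then have "(last hh, g hh) \<in> E" using str that unfolding is_strategy_def by blast
    moreover have "\<not> own b (last hh)" using Pown True that(2) WV by blast
    ultimately show ?thesis using cl that(2) True unfolding clos_def nxt_def by auto
  next
    case False
    then have "own b (last hh)" using Pown that(2) WV by blast
    then show ?thesis using cl that(2) False unfolding clos_def nxt_def by auto
  qed
  have inv: "is_prefix E q0 (h n) \<and> last (h n) \<in> W \<and> length (h n) = Suc n" for n
  proof (induction n)
    case 0 then show ?case using q0W h0 unfolding is_prefix_def by simp
  next
    case (Suc n)
    have st: "(last (h n), nxt (h n)) \<in> E" "nxt (h n) \<in> W" using stepE Suc by auto
    have ln: "length (h n) = Suc n" using Suc by simp
    have pre: "is_prefix E q0 (h n @ [nxt (h n)])" unfolding is_prefix_def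
    proof (intro conjI allI impI)
      show "h n @ [nxt (h n)] \<noteq> []" by simp
      show "hd (h n @ [nxt (h n)]) = q0" using Suc unfolding is_prefix_def by simp
      fix i assume i: "Suc i < length (h n @ [nxt (h n)])"
      show "((h n @ [nxt (h n)]) ! i, (h n @ [nxt (h n)]) ! Suc i) \<in> E"
      proof (cases "Suc i < length (h n)")
        case True
        then show ?thesis using Suc unfolding is_prefix_def by (simp add: nth_append)
      next
        case False
        then have "i = n" using i ln by simp
        moreover have "h n ! n = last (h n)"
        proof -
          have "h n \<noteq> []" using ln by auto
          then show ?thesis using ln last_conv_nth[of "h n"] by simp
        qed
        ultimately show ?thesis using st ln by (simp add: nth_append)
      qed
    qed
    then show ?case using hS st ln by simp
  qed
  define p where "p = (\<lambda>i. last (h i))"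
  have mp: "map p [0..<Suc i] = h i" for i
  proof (induction i)
    case 0 then show ?case using h0 p_def by simp
  next
    case (Suc i)
    have "map p [0..<Suc (Suc i)] = map p [0..<Suc i] @ [p (Suc i)]" by simp
    also have "\<dots> = h i @ [nxt (h i)]" using Suc hS p_def by simp
    finally show ?case using hS by simp
  qed
  have pS: "p (Suc i) = nxt (h i)" for i using hS p_def by simp
  have "is_play E q0 p" unfolding is_play_def
    using h0 p_def pS stepE inv p_def by auto
  moreover have "consistent P g p" unfolding consistent_def
    using pS mp nxt_def p_def by auto
  moreover have "consW b s W p" unfolding consW_def
  proof (intro allI impI)
    fix i assume "p i \<in> W" "own b (p i)"
    then have "p i \<notin> P" using Pown WV by blast
    then show "p (Suc i) = s (p i)" using pS nxt_def p_def by simp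
  qed
  ultimately show ?thesis by blast
qed

lemma to_defs:
  assumes gg: "game_graph V VE E w q0" and W: "wins b E W s" and q0W: "q0 \<in> W" and WV: "W \<subseteq> V"
    and P: "P = (if b then VE else V - VE)"
  shows "\<exists>\<sigma>. positional \<sigma> \<and> is_strategy E q0 P \<sigma> \<and> (\<forall>p. is_play E q0 p \<and> consistent P \<sigma> p \<longrightarrow> win b p)"
proof -
  define s' where "s' = (\<lambda>u. if u \<in> W then s u else SOME x. (u, x) \<in> E)"
  define \<sigma> where "\<sigma> = (\<lambda>h. s' (last h))"
  have cl: "clos b E W s" using W wins_def by blast
  have Pown: "u \<in> P \<longleftrightarrow> own b u" if "u \<in> V" for u using that P unfolding own_def by auto
  have pos: "positional \<sigma>" unfolding positional_def \<sigma>_def by blast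
  have str: "is_strategy E q0 P \<sigma>" unfolding is_strategy_def
  proof (intro allI impI)
    fix h assume h: "is_prefix E q0 h \<and> last h \<in> P"
    have lV: "last h \<in> V" using prefix_last[OF gg] h by blast
    show "(last h, \<sigma> h) \<in> E"
    proof (cases "last h \<in> W")
      case True
      then show ?thesis using cl Pown[OF lV] h unfolding clos_def \<sigma>_def s'_def by auto
    next
      case False
      have "\<exists>x. (last h, x) \<in> E" using gg lV unfolding game_graph_def by blast
      then show ?thesis using False unfolding \<sigma>_def s'_def by (auto intro: someI_ex)
    qed
  qed
  have "win b p" if p: "is_play E q0 p" "consistent P \<sigma> p" for p
  proof -
    have "pl E p" using p(1) unfolding is_play_def pl_def by blast
    moreover have "p 0 \<in> W" using p(1) q0W unfolding is_play_def by simp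
    moreover have "consW b s W p" unfolding consW_def
    proof (intro allI impI)
      fix i assume i: "p i \<in> W" "own b (p i)"
      then have "p i \<in> P" using Pown WV by blast
      then have "p (Suc i) = \<sigma> (map p [0..<Suc i])" using p(2) unfolding consistent_def by blast
      then show "p (Suc i) = s (p i)" using i unfolding \<sigma>_def s'_def by simp
    qed
    ultimately show ?thesis using W unfolding wins_def by blast
  qed
  then show ?thesis using pos str by blast
qed

end



theorem mainTheorem2:
  fixes V VE :: "'v set" and E :: "('v \<times> 'v) set" and w :: "'v \<times> 'v \<Rightarrow> int"
    and q0 :: 'v and I :: "real set"
  assumes "game_graph V VE E w q0"
    and "finite_union_of_intervals I"
  shows "((\<exists>\<sigma>. eve_winning_strategy V VE E w q0 I \<sigma>)
            \<longrightarrow> (\<exists>\<sigma>. positional \<sigma> \<and> eve_winning_strategy V VE E w q0 I \<sigma>))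
       \<and> ((\<exists>\<tau>. adam_winning_strategy V VE E w q0 I \<tau>)
            \<longrightarrow> (\<exists>\<tau>. positional \<tau> \<and> adam_winning_strategy V VE E w q0 I \<tau>))"
proof -
  interpret G VE w "{k. real_of_int k \<in> I}" .
  note gg = assms(1)
  have finV: "finite V" and EV: "E \<subseteq> V \<times> V" and arV: "\<forall>v\<in>V. \<exists>u. (v, u) \<in> E" and q0V: "q0 \<in> V"
    using gg unfolding game_graph_def by auto
  have finE: "finite E" using finite_subset[OF EV] finV by blast
  obtain W0 W1 s0 s1 where D: "W0 \<union> W1 = V" "wins True E W0 s0" "wins False E W1 s1"
    using zielonka[OF finE EV arV] unfolding det_def by blast
  have cl1: "clos False E W1 s1" and cl0: "clos True E W0 s0" using D wins_def by blast+
  have LIk: "liminf_payoff w p \<in> ereal ` I \<longleftrightarrow> real_of_int k \<in> I" if "LI p k" for p k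
    using LI_liminf[OF that] by auto
  have eve: "\<exists>\<sigma>. positional \<sigma> \<and> eve_winning_strategy V VE E w q0 I \<sigma>"
    if e: "eve_winning_strategy V VE E w q0 I \<sigma>E" for \<sigma>E
  proof (cases "q0 \<in> W0")
    case True
    obtain \<sigma> where \<sigma>: "positional \<sigma>" "is_strategy E q0 VE \<sigma>" "\<forall>p. is_play E q0 p \<and> consistent VE \<sigma> p \<longrightarrow> win True p"
      using to_defs[OF gg D(2) True _, of VE] D(1) by auto
    have "eve_winning_strategy V VE E w q0 I \<sigma>" unfolding eve_winning_strategy_def
      using \<sigma> LIk unfolding win_def by blast
    then show ?thesis using \<sigma>(1) by blast
  next
    case False
    then have q1: "q0 \<in> W1" using D(1) q0V by blast
    obtain p where p: "is_play E q0 p" "consistent VE \<sigma>E p" "consW False s1 W1 p"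
      using mkplay[OF gg _ cl1 q1, of VE \<sigma>E] e D(1) unfolding eve_winning_strategy_def own_def by auto
    have "win False p" using D(3) p q1 unfolding wins_def is_play_def pl_def by auto
    moreover have "liminf_payoff w p \<in> ereal ` I" using e p unfolding eve_winning_strategy_def by blast
    ultimately show ?thesis using LIk unfolding win_def by auto
  qed
  have adam: "\<exists>\<tau>. positional \<tau> \<and> adam_winning_strategy V VE E w q0 I \<tau>"
    if a: "adam_winning_strategy V VE E w q0 I \<tau>A" for \<tau>A
  proof (cases "q0 \<in> W1")
    case True
    obtain \<tau> where \<tau>: "positional \<tau>" "is_strategy E q0 (V - VE) \<tau>" "\<forall>p. is_play E q0 p \<and> consistent (V - VE) \<tau> p \<longrightarrow> win False p"
      using to_defs[OF gg D(3) True _, of "V - VE"] D(1) by auto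
    have "adam_winning_strategy V VE E w q0 I \<tau>" unfolding adam_winning_strategy_def
      using \<tau> LIk unfolding win_def by blast
    then show ?thesis using \<tau>(1) by blast
  next
    case False
    then have q1: "q0 \<in> W0" using D(1) q0V by blast
    obtain p where p: "is_play E q0 p" "consistent (V - VE) \<tau>A p" "consW True s0 W0 p"
      using mkplay[OF gg _ cl0 q1, of "V - VE" \<tau>A] a D(1) unfolding adam_winning_strategy_def own_def by auto
    have "win True p" using D(2) p q1 unfolding wins_def is_play_def pl_def by auto
    moreover have "liminf_payoff w p \<notin> ereal ` I" using a p unfolding adam_winning_strategy_def by blast
    ultimately show ?thesis using LIk unfolding win_def by auto
  qed
  show ?thesis using eve adam by blast
qed



end
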